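(* Every binary $t$-break-resilient code $\mathcal{C}\subseteq\{0,1\}^n$ satisfies $n-\log_2|\mathcal{C}|\ge \Omega\!\left(t\log \frac{n}{t}\right)$.
   Context: Breaking a binary string $\mathbf{x}\in\{0,1\}^n$ at $s\le t$ positions means choosing $s$ cut points between consecutive entries, producing $s+1$ consecutive substrings called fragments; fragments are oriented (read left to right as in $\mathbf{x}$) but given as an unordered multiset. A code $\mathcal{C}\subseteq\{0,1\}^n$ is a $t$-break-resilient code ($t$-BRC) if for any two distinct codewords $\mathbf{x},\mathbf{y}\in\mathcal{C}$, no choice of at most $t$ break positions in $\mathbf{x}$ and at most $t$ break positions in $\mathbf{y}$ yields the same multiset of fragments. The quantity $n-\log_2|\mathcal{C}|$ is the redundancy of $\mathcal{C}$; the $\Omega$ is asymptotic in $n$, with $t$ allowed to depend on $n$. *)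

theory Defs
  imports Complex_Main "HOL-Library.Multiset"
begin

text \<open>Breaking x at s cut points (between
consecutive entries) yields s+1 nonempty consecutive fragments, i.e. a list fs of
nonempty lists with concat fs = x; the result is the multiset of fragments.
Breaking at at most t positions means length fs \<le> t + 1.\<close>

definition fragment_multisets :: "nat \<Rightarrow> bool list \<Rightarrow> bool list multiset set" where
  "fragment_multisets t x =
     {mset fs | fs. concat fs = x \<and> [] \<notin> set fs \<and> length fs \<le> t + 1}"

definition is_BRC :: "nat \<Rightarrow> nat \<Rightarrow> bool list set \<Rightarrow> bool" where
  "is_BRC t n C \<longleftrightarrow>
     C \<subseteq> {x. length x = n} \<and>
     (\<forall>x\<in>C. \<forall>y\<in>C. x \<noteq> y \<longrightarrow> fragment_multisets t x \<inter> fragment_multisets t y = {})"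

end

theory Submission
  imports Defs
begin

fun blocks :: "nat list \<Rightarrow> 'a list \<Rightarrow> 'a list list" where
  "blocks [] x = []"
| "blocks (l#ls) x = take l x # blocks ls (drop l x)"

lemma length_blocks[simp]: "length (blocks ls x) = length ls"
  by (induction ls arbitrary: x) auto

definition rotrel :: "'a list \<Rightarrow> 'a list \<Rightarrow> bool" where
  "rotrel a b \<longleftrightarrow> (\<exists>k. b = rotate k a)"

lemma rotrel_refl: "rotrel a a"
  unfolding rotrel_def by (metis rotate0 id_apply)

lemma rotrel_trans: "rotrel a b \<Longrightarrow> rotrel b c \<Longrightarrow> rotrel a c"
  unfolding rotrel_def by (metis rotate_rotate)

lemma rotrel_length: "rotrel a b \<Longrightarrow> length b = length a"
  unfolding rotrel_def by auto

lemma rotrel_sym: assumes "rotrel a b" shows "rotrel b a"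
proof -
  obtain k where b: "b = rotate k a" using assms unfolding rotrel_def by auto
  show ?thesis
  proof (cases "a = []")
    case True then show ?thesis using b by (simp add: rotrel_refl)
  next
    case False
    define L where "L = length a"
    have L: "L > 0" using False L_def by auto
    have "rotate (L - k mod L) b = rotate (L - k mod L + k) a" using b by (simp add: rotate_rotate)
    also have "\<dots> = a"
    proof (rule rotate_id)
      have "k mod L < L" using L by simp
      have "L - k mod L + k = L + (k div L) * L"
        using \<open>k mod L < L\<close> div_mult_mod_eq[of k L] by linarith
      then show "(L - k mod L + k) mod length a = 0" unfolding L_def[symmetric] by simp
    qed
    finally show ?thesis unfolding rotrel_def by metis
  qed
qed

lemma rel_frags:
  assumes "length x = sum_list ls" "length y = sum_list ls"
    "list_all2 rotrel (blocks ls x) (blocks ls y)"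
  shows "\<exists>fx fy. concat fx = x \<and> concat fy = y \<and> mset fx = mset fy \<and> length fx \<le> 2 * length ls"
  using assms
proof (induction ls arbitrary: x y)
  case Nil then show ?case by (intro exI[of _ "[]"]) simp
next
  case (Cons l ls)
  have r1: "rotrel (take l x) (take l y)" and r2: "list_all2 rotrel (blocks ls (drop l x)) (blocks ls (drop l y))"
    using Cons.prems(3) by auto
  obtain fx fy where f: "concat fx = drop l x" "concat fy = drop l y" "mset fx = mset fy"
    "length fx \<le> 2 * length ls"
    using Cons.IH[OF _ _ r2] Cons.prems(1,2) by auto
  obtain k where k: "take l y = rotate k (take l x)" using r1 unfolding rotrel_def by auto
  define a where "a = take l x"
  define j where "j = k mod length a"
  have ty: "take l y = drop j a @ take j a" using k unfolding a_def j_def by (simp add: rotate_drop_take)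
  have "concat (take j a # drop j a # fx) = x" using f(1) unfolding a_def
    by (metis append.assoc append_take_drop_id concat.simps(2))
  moreover have "concat (drop j a # take j a # fy) = y" using f(2) ty
    by (metis append.assoc append_take_drop_id concat.simps(2))
  moreover have "mset (take j a # drop j a # fx) = mset (drop j a # take j a # fy)"
    using f(3) by simp
  moreover have "length (take j a # drop j a # fx) \<le> 2 * length (l # ls)" using f(4) by simp
  ultimately show ?case by blast
qed

lemma concat_filter_ne: "concat (filter (\<lambda>s. s \<noteq> []) xs) = concat xs"
  by (induction xs) auto

lemma frag_in:
  assumes "concat fs = x" "length fs \<le> t + 1"
  shows "mset (filter (\<lambda>s. s \<noteq> []) fs) \<in> fragment_multisets t x"
proof -
  have "concat (filter (\<lambda>s. s \<noteq> []) fs) = x" using assms(1) by (simp add: concat_filter_ne)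
  moreover have "[] \<notin> set (filter (\<lambda>s. s \<noteq> []) fs)" by simp
  moreover have "length (filter (\<lambda>s. s \<noteq> []) fs) \<le> t + 1"
    using assms(2) length_filter_le order.trans by blast
  ultimately show ?thesis unfolding fragment_multisets_def by blast
qed

lemma confusable:
  assumes "is_BRC t n C" "x \<in> C" "y \<in> C" "n = sum_list ls" "2 * length ls \<le> t + 1"
    "list_all2 rotrel (blocks ls x) (blocks ls y)"
  shows "x = y"
proof (rule ccontr)
  assume ne: "x \<noteq> y"
  have lx: "length x = sum_list ls" and ly: "length y = sum_list ls"
    using assms(1-4) unfolding is_BRC_def by auto
  obtain fx fy where f: "concat fx = x" "concat fy = y" "mset fx = mset fy" "length fx \<le> 2 * length ls"
    using rel_frags[OF lx ly assms(6)] by blast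
  have lf: "length fy = length fx" using f(3) by (metis size_mset)
  have i1: "mset (filter (\<lambda>s. s \<noteq> []) fx) \<in> fragment_multisets t x"
    using frag_in[OF f(1)] f(4) assms(5) by simp
  have i2: "mset (filter (\<lambda>s. s \<noteq> []) fy) \<in> fragment_multisets t y"
    using frag_in[OF f(2)] f(4) assms(5) lf by simp
  have eq: "mset (filter (\<lambda>s. s \<noteq> []) fx) = mset (filter (\<lambda>s. s \<noteq> []) fy)"
    using f(3) by (simp only: mset_filter)
  have "fragment_multisets t x \<inter> fragment_multisets t y = {}"
    using assms(1-3) ne unfolding is_BRC_def by blast
  then show False using i1 i2 eq by auto
qed

definition rclass :: "'a list \<Rightarrow> 'a list set" where
  "rclass a = {b. rotrel a b}"

definition Q :: "nat \<Rightarrow> bool list set set" where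
  "Q l = rclass ` {b. length b = l}"

lemma finite_len: "finite {b::bool list. length b = l}"
  using finite_lists_length_eq[of "UNIV::bool set" l] by simp

lemma card_len: "card {b::bool list. length b = l} = 2 ^ l"
  using card_lists_length_eq[of "UNIV::bool set" l] by simp

lemma finite_Q: "finite (Q l)"
  unfolding Q_def using finite_len by simp

fun S :: "nat list \<Rightarrow> bool list set list set" where
  "S [] = {[]}"
| "S (l#ls) = (\<lambda>(c,cs). c#cs) ` (Q l \<times> S ls)"

lemma finite_S: "finite (S ls)"
  by (induction ls) (auto simp: finite_Q)

lemma card_S: "card (S ls) \<le> prod_list (map (\<lambda>l. card (Q l)) ls)"
proof (induction ls)
  case Nil then show ?case by simp
next
  case (Cons l ls)
  have "card (S (l#ls)) \<le> card (Q l \<times> S ls)" by (simp only: S.simps) (rule card_image_le, simp add: finite_Q finite_S)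
  also have "\<dots> = card (Q l) * card (S ls)" by (simp add: card_cartesian_product)
  also have "\<dots> \<le> card (Q l) * prod_list (map (\<lambda>l. card (Q l)) ls)" using Cons by simp
  finally show ?case by simp
qed

lemma phi_in: "length x = sum_list ls \<Longrightarrow> map rclass (blocks ls x) \<in> S ls"
proof (induction ls arbitrary: x)
  case Nil then show ?case by simp
next
  case (Cons l ls)
  have "rclass (take l x) \<in> Q l" unfolding Q_def using Cons.prems by auto
  moreover have "map rclass (blocks ls (drop l x)) \<in> S ls" using Cons by simp
  ultimately show ?case by force
qed

lemma card_C:
  assumes "is_BRC t n C" "n = sum_list ls" "2 * length ls \<le> t + 1"
  shows "card C \<le> prod_list (map (\<lambda>l. card (Q l)) ls)"
proof -
  let ?phi = "\<lambda>x. map rclass (blocks ls x)"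
  have inj: "inj_on ?phi C"
  proof (rule inj_onI)
    fix x y assume xy: "x \<in> C" "y \<in> C" "?phi x = ?phi y"
    have "list_all2 rotrel (blocks ls x) (blocks ls y)"
    proof (unfold list_all2_conv_all_nth, intro conjI allI impI)
      show "length (blocks ls x) = length (blocks ls y)" by simp
      fix i assume "i < length (blocks ls x)"
      then have "rclass (blocks ls x ! i) = rclass (blocks ls y ! i)"
        using xy(3) by (metis length_blocks nth_map)
      then show "rotrel (blocks ls x ! i) (blocks ls y ! i)"
        unfolding rclass_def using rotrel_refl by (metis mem_Collect_eq)
    qed
    then show "x = y" using confusable[OF assms(1) xy(1,2) assms(2,3)] by simp
  qed
  have "?phi ` C \<subseteq> S ls" using phi_in assms(1,2) unfolding is_BRC_def by auto
  then have "card (?phi ` C) \<le> card (S ls)" by (simp add: card_mono finite_S)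
  then show ?thesis using card_S inj by (metis card_image order.trans)
qed


lemma rot_period:
  assumes "rotate k b = b" "0 < k" "i < length b"
  shows "b ! i = b ! (i mod k)"
  using assms(3)
proof (induction i rule: less_induct)
  case (less i)
  show ?case
  proof (cases "i < k")
    case True then show ?thesis by simp
  next
    case False
    then have ik: "i - k < length b" using less.prems by simp
    have "b ! (i - k) = rotate k b ! (i - k)" using assms(1) by simp
    also have "\<dots> = b ! ((k + (i - k)) mod length b)" using nth_rotate[OF ik] by simp
    also have "\<dots> = b ! i" using False less.prems by simp
    finally have "b ! i = b ! (i - k)" by simp
    also have "\<dots> = b ! ((i - k) mod k)" using less.IH[of "i - k"] ik assms(2) False by simp
    also have "(i - k) mod k = i mod k" using False by (simp add: le_mod_geq)
    finally show ?thesis .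
  qed
qed

definition P :: "nat \<Rightarrow> nat \<Rightarrow> bool list set" where
  "P L k = {b. length b = L \<and> rotate k b = b}"

lemma card_P: assumes "0 < k" shows "card (P L k) \<le> 2 ^ k"
proof -
  have inj: "inj_on (take k) (P L k)"
  proof (rule inj_onI)
    fix b b' assume bb: "b \<in> P L k" "b' \<in> P L k" "take k b = take k b'"
    show "b = b'"
    proof (rule nth_equalityI)
      show "length b = length b'" using bb unfolding P_def by simp
      fix i assume i: "i < length b"
      have il: "i < length b'" using i bb unfolding P_def by simp
      have m: "i mod k < k" using assms by simp
      have m2: "i mod k \<le> i" by simp
      have "b ! i = b ! (i mod k)" using rot_period[of k b i] bb i assms unfolding P_def by simp
      also have "\<dots> = take k b ! (i mod k)" using m m2 i by simp
      also have "\<dots> = take k b' ! (i mod k)" using bb by simp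
      also have "\<dots> = b' ! (i mod k)" using m m2 il by simp
      also have "\<dots> = b' ! i" using rot_period[of k b' i] bb il assms unfolding P_def by simp
      finally show "b ! i = b' ! i" .
    qed
  qed
  have sub: "take k ` P L k \<subseteq> {u. length u = min k L}" unfolding P_def by auto
  have "card (P L k) = card (take k ` P L k)" using inj by (simp add: card_image)
  also have "\<dots> \<le> card {u::bool list. length u = min k L}" using sub finite_len by (rule card_mono[rotated])
  also have "\<dots> = 2 ^ min k L" by (rule card_len)
  also have "\<dots> \<le> 2 ^ k" by (rule power_increasing) auto
  finally show ?thesis .
qed

lemma geo: "(\<Sum>k\<in>{1..a}. (2::nat) ^ k) \<le> 2 ^ (a + 1)"
  by (induction a) auto

definition Bad :: "nat \<Rightarrow> bool list set" where
  "Bad L = {b. length b = L \<and> (\<exists>k. 0 < k \<and> k \<le> L div 2 \<and> rotate k b = b)}"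

definition Good :: "nat \<Rightarrow> bool list set" where
  "Good L = {b. length b = L} - Bad L"

lemma finite_Bad: "finite (Bad L)"
  using finite_len[of L] by (rule finite_subset[rotated]) (auto simp: Bad_def)

lemma card_Bad: "card (Bad L) \<le> 2 ^ (L div 2 + 1)"
proof -
  have sub: "Bad L \<subseteq> (\<Union>k\<in>{1..L div 2}. P L k)"
  proof
    fix b assume "b \<in> Bad L"
    then obtain k where "length b = L" "0 < k" "k \<le> L div 2" "rotate k b = b" unfolding Bad_def by auto
    then show "b \<in> (\<Union>k\<in>{1..L div 2}. P L k)" unfolding P_def by (intro UN_I[of k]) auto
  qed
  have fin: "finite (\<Union>k\<in>{1..L div 2}. P L k)"
    using finite_len[of L] by (rule finite_subset[rotated]) (auto simp: P_def)
  have "card (Bad L) \<le> card (\<Union>k\<in>{1..L div 2}. P L k)" using sub fin by (rule card_mono[rotated])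
  also have "\<dots> \<le> (\<Sum>k\<in>{1..L div 2}. card (P L k))" by (rule card_UN_le) simp
  also have "\<dots> \<le> (\<Sum>k\<in>{1..L div 2}. 2 ^ k)" by (rule sum_mono) (simp add: card_P)
  also have "\<dots> \<le> 2 ^ (L div 2 + 1)" by (rule geo)
  finally show ?thesis .
qed

lemma rclass_eq: "rotrel a b \<Longrightarrow> rclass a = rclass b"
  unfolding rclass_def using rotrel_trans rotrel_sym by blast

lemma rclass_sub: "length b = L \<Longrightarrow> rclass b \<subseteq> {c. length c = L}"
  unfolding rclass_def using rotrel_length by auto

lemma good_card:
  assumes "b \<in> Good L"
  shows "L \<le> card (rclass b)"
proof -
  have lb: "length b = L" using assms unfolding Good_def by simp
  have nb: "b \<notin> Bad L" using assms unfolding Good_def by simp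
  have inj: "inj_on (\<lambda>i. rotate i b) {..<L}"
  proof -
    have *: "i = j" if ij: "i < j" "j < L" "rotate i b = rotate j b" for i j
    proof (rule ccontr)
      define d where "d = j - i"
      have d: "0 < d" "d < L" using ij unfolding d_def by auto
      have "rotate (L - i) (rotate i b) = b"
        using ij(1,2) by (simp add: rotate_rotate rotate_id lb)
      moreover have "rotate (L - i) (rotate j b) = rotate d b"
      proof -
        have "rotate (L - i) (rotate j b) = rotate (L - i + j) b" by (simp add: rotate_rotate)
        also have "\<dots> = rotate ((L - i + j) mod L) b" by (metis rotate_conv_mod lb)
        also have "(L - i + j) mod L = d"
        proof -
          have "L - i + j = d + L" using ij unfolding d_def by simp
          then show ?thesis using d by simp
        qed
        finally show ?thesis .
      qed
      ultimately have r1: "rotate d b = b" using ij by simp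
      have r2: "rotate (L - d) b = b"
      proof -
        have "rotate (L - d) b = rotate (L - d) (rotate d b)" using r1 by simp
        also have "\<dots> = rotate L b" using d by (simp add: rotate_rotate)
        also have "\<dots> = b" by (simp add: rotate_id lb)
        finally show ?thesis .
      qed
      have "b \<in> Bad L"
      proof (cases "d \<le> L div 2")
        case True then show ?thesis using r1 d lb unfolding Bad_def by auto
      next
        case False
        then have "L - d \<le> L div 2" "0 < L - d" using d by auto
        then show ?thesis using r2 lb unfolding Bad_def by blast
      qed
      then show False using nb by simp
    qed
    show ?thesis
    proof (rule inj_onI)
      fix i j assume "i \<in> {..<L}" "j \<in> {..<L}" "rotate i b = rotate j b"
      then show "i = j" using *[of i j] *[of j i] by (cases i j rule: linorder_cases) auto
    qed
  qed
  have sub: "(\<lambda>i. rotate i b) ` {..<L} \<subseteq> rclass b" unfolding rclass_def rotrel_def by auto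
  have fin: "finite (rclass b)" using rclass_sub[OF lb] finite_len by (rule finite_subset)
  have "L = card ((\<lambda>i. rotate i b) ` {..<L})" using inj by (simp add: card_image)
  also have "\<dots> \<le> card (rclass b)" using sub fin by (rule card_mono[rotated])
  finally show ?thesis .
qed

lemma good_part: "L * card (rclass ` Good L) \<le> 2 ^ L"
proof -
  let ?G = "rclass ` Good L"
  have disj: "pairwise disjnt ?G"
  proof (rule pairwiseI)
    fix q1 q2 assume q: "q1 \<in> ?G" "q2 \<in> ?G" "q1 \<noteq> q2"
    then obtain a b where ab: "q1 = rclass a" "q2 = rclass b" by auto
    show "disjnt q1 q2"
    proof (rule ccontr)
      assume "\<not> disjnt q1 q2"
      then obtain c where "c \<in> q1" "c \<in> q2" unfolding disjnt_def by auto
      then have "rotrel a c" "rotrel b c" using ab unfolding rclass_def by auto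
      then have "rotrel a b" using rotrel_trans rotrel_sym by blast
      then show False using rclass_eq q ab by auto
    qed
  qed
  have subU: "\<Union>?G \<subseteq> {c::bool list. length c = L}"
    using rclass_sub unfolding Good_def by blast
  have finq: "\<And>A. A \<in> ?G \<Longrightarrow> finite A"
    using subU finite_len by (meson Sup_upper finite_subset)
  have finG: "finite ?G" using finite_len by (auto simp: Good_def)
  have "L * card ?G = (\<Sum>q\<in>?G. L)" by simp
  also have "\<dots> \<le> (\<Sum>q\<in>?G. card q)" by (rule sum_mono) (auto simp: good_card)
  also have "\<dots> = card (\<Union>?G)" using card_Union_disjoint[OF disj finq] by simp
  also have "\<dots> \<le> card {c::bool list. length c = L}" using subU finite_len by (rule card_mono[rotated])
  also have "\<dots> = 2 ^ L" by (rule card_len)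
  finally show ?thesis .
qed

lemma aux_exp: "8 \<le> a \<Longrightarrow> 4 * a + 2 \<le> (2::nat) ^ a"
proof (induction a rule: nat_induct_at_least)
  case base then show ?case by simp
next
  case (Suc n)
  have "(2::nat) ^ 2 \<le> 2 ^ n" using Suc(1) by (intro power_increasing) auto
  then have "4 \<le> (2::nat) ^ n" by simp
  then show ?case using Suc by simp
qed

lemma num_bound: assumes "16 \<le> L" shows "L * 2 ^ (L div 2 + 1) \<le> (2::nat) ^ L"
proof -
  define a where "a = L div 2"
  have a8: "8 \<le> a" using assms unfolding a_def by simp
  have La: "L \<le> 2 * a + 1" "2 * a \<le> L" unfolding a_def by auto
  have "L * 2 ^ (a + 1) \<le> (2 * a + 1) * 2 ^ (a + 1)" using La(1) by (rule mult_le_mono1)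
  also have "\<dots> = (4 * a + 2) * 2 ^ a" by (simp add: algebra_simps)
  also have "\<dots> \<le> 2 ^ a * 2 ^ a" by (rule mult_le_mono1[OF aux_exp[OF a8]])
  also have "\<dots> = 2 ^ (2 * a)" by (simp add: power_add[symmetric] mult_2)
  also have "\<dots> \<le> 2 ^ L" using La by (simp add: power_increasing)
  finally show ?thesis unfolding a_def .
qed

lemma neck: assumes "16 \<le> L" shows "L * card (Q L) \<le> 2 * 2 ^ L"
proof -
  have QU: "Q L = rclass ` Good L \<union> rclass ` Bad L"
    unfolding Q_def Good_def Bad_def by auto
  have "card (Q L) \<le> card (rclass ` Good L) + card (rclass ` Bad L)"
    unfolding QU by (rule card_Un_le)
  also have "\<dots> \<le> card (rclass ` Good L) + card (Bad L)"
    using card_image_le[OF finite_Bad] by simp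
  finally have "L * card (Q L) \<le> L * card (rclass ` Good L) + L * card (Bad L)"
    by (metis add_mult_distrib2 mult_le_mono2)
  also have "\<dots> \<le> 2 ^ L + L * 2 ^ (L div 2 + 1)"
    using good_part card_Bad by (meson add_mono mult_le_mono2)
  also have "\<dots> \<le> 2 ^ L + 2 ^ L" using num_bound[OF assms] by simp
  finally show ?thesis by simp
qed


lemma prod_bound:
  assumes "16 \<le> L" "\<forall>l\<in>set ls. L \<le> l"
  shows "real (prod_list (map (\<lambda>l. card (Q l)) ls)) * (real L / 2) ^ length ls \<le> 2 ^ sum_list ls"
  using assms(2)
proof (induction ls)
  case Nil then show ?case by simp
next
  case (Cons l ls)
  have Ll: "L \<le> l" using Cons.prems by simp
  have nk: "l * card (Q l) \<le> 2 * 2 ^ l" using neck[of l] Ll assms(1) by simp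
  then have "real (l * card (Q l)) \<le> real (2 * 2 ^ l)" by (simp only: of_nat_le_iff)
  then have nk': "real l * real (card (Q l)) \<le> 2 * 2 ^ l" by simp
  have q: "real (card (Q l)) * (real L / 2) \<le> 2 ^ l"
  proof -
    have "real (card (Q l)) * (real L / 2) \<le> real (card (Q l)) * (real l / 2)"
      using Ll by (intro mult_left_mono) auto
    also have "\<dots> = (real l * real (card (Q l))) / 2" by simp
    also have "\<dots> \<le> 2 ^ l" using nk' by simp
    finally show ?thesis .
  qed
  have ih: "real (prod_list (map (\<lambda>l. card (Q l)) ls)) * (real L / 2) ^ length ls \<le> 2 ^ sum_list ls"
    using Cons by simp
  have "real (prod_list (map (\<lambda>l. card (Q l)) (l # ls))) * (real L / 2) ^ length (l # ls)
      = (real (card (Q l)) * (real L / 2)) * (real (prod_list (map (\<lambda>l. card (Q l)) ls)) * (real L / 2) ^ length ls)"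
    by (simp add: algebra_simps)
  also have "\<dots> \<le> 2 ^ l * 2 ^ sum_list ls"
    using q ih by (intro mult_mono) auto
  also have "\<dots> = 2 ^ sum_list (l # ls)" by (simp add: power_add)
  finally show ?case .
qed

lemma main:
  assumes "is_BRC t n C" "1 \<le> m" "16 \<le> L" "m * L \<le> n" "2 * m \<le> t + 1"
  shows "real (card C) * (real L / 2) ^ m \<le> 2 ^ n"
proof -
  define ls where "ls = replicate (m - 1) L @ [n - (m - 1) * L]"
  have mL: "m * L = (m - 1) * L + L"
  proof -
    have "m = Suc (m - 1)" using assms(2) by simp
    then show ?thesis by (metis mult_Suc add.commute)
  qed
  have sum: "sum_list ls = n" unfolding ls_def using assms(4) mL by (simp add: sum_list_replicate)
  have len: "length ls = m" unfolding ls_def using assms(2) by simp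
  have ge: "\<forall>l\<in>set ls. L \<le> l" unfolding ls_def using assms(4) mL by auto
  have "card C \<le> prod_list (map (\<lambda>l. card (Q l)) ls)"
    using card_C[OF assms(1) sum[symmetric]] assms(5) len by simp
  then have "real (card C) * (real L / 2) ^ m \<le> real (prod_list (map (\<lambda>l. card (Q l)) ls)) * (real L / 2) ^ m"
    by (intro mult_right_mono) auto
  also have "\<dots> \<le> 2 ^ n" using prod_bound[OF assms(3) ge] sum len by simp
  finally show ?thesis .
qed

lemma red:
  assumes "is_BRC t n C" "1 \<le> m" "16 \<le> L" "m * L \<le> n" "2 * m \<le> t + 1"
  shows "real m * log 2 (real L / 2) \<le> real n - log 2 (real (card C))"
proof -
  have Lpos: "0 < real L / 2" using assms(3) by simp
  have lhs: "real m * log 2 (real L / 2) = log 2 ((real L / 2) ^ m)"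
    using Lpos by (simp add: log_nat_power)
  show ?thesis
  proof (cases "card C = 0")
    case True
    have "real L / 2 \<le> 2 ^ L"
    proof -
      have "real L \<le> real (2 ^ L)" using less_exp[of L] by (simp only: of_nat_le_iff)
      then have "real L \<le> 2 ^ L" by simp
      moreover have "real L / 2 \<le> real L" by simp
      ultimately show ?thesis by linarith
    qed
    then have "(real L / 2) ^ m \<le> (2 ^ L) ^ m" using Lpos by (intro power_mono) auto
    also have "\<dots> = 2 ^ (m * L)" by (simp add: power_mult[symmetric] mult.commute)
    also have "\<dots> \<le> 2 ^ n" using assms(4) by (intro power_increasing) auto
    finally have "log 2 ((real L / 2) ^ m) \<le> log 2 (2 ^ n)"
      using Lpos by (subst log_le_cancel_iff) auto
    moreover have "log 2 (real (card C)) = 0" using True by (simp add: log_def)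
    ultimately show ?thesis using lhs by simp
  next
    case False
    have m: "real (card C) * (real L / 2) ^ m \<le> 2 ^ n" by (rule main[OF assms])
    have pos: "0 < real (card C) * (real L / 2) ^ m" using False Lpos by simp
    have "log 2 (real (card C) * (real L / 2) ^ m) \<le> log 2 (2 ^ n)"
      using m pos by (subst log_le_cancel_iff) auto
    moreover have "log 2 (real (card C) * (real L / 2) ^ m) = log 2 (real (card C)) + log 2 ((real L / 2) ^ m)"
      using False Lpos by (simp add: log_mult)
    ultimately show ?thesis using lhs by simp
  qed
qed

theorem theorem1:
  shows "\<exists>c::real. c > 0 \<and> (\<exists>N::nat. \<forall>n\<ge>N. \<forall>t::nat. t \<ge> 1 \<longrightarrow>
           (\<forall>C. is_BRC t n C \<longrightarrow>
              real n - log 2 (real (card C)) \<ge> c * real t * log 2 (real n / real t)))"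
proof (intro exI[of _ "1/100"] conjI exI[of _ 32] allI impI)
  fix n t :: nat and C
  assume n: "32 \<le> n" and t: "1 \<le> t" and C: "is_BRC t n C"
  define y where "y = log 2 (real n / real t)"
  have l32: "log 2 (32::real) = 5"
  proof -
    have "log 2 ((2::real) ^ 5) = 5" using log_pow_cancel[of "2::real" 5] by simp
    then show ?thesis by simp
  qed
  have l4: "log 2 (4::real) = 2"
  proof -
    have "log 2 ((2::real) ^ 2) = 2" using log_pow_cancel[of "2::real" 2] by simp
    then show ?thesis by simp
  qed
  have l8: "log 2 (real 16 / 2) = 3"
  proof -
    have "log 2 ((2::real) ^ 3) = 3" using log_pow_cancel[of "2::real" 3] by simp
    then show ?thesis by simp
  qed
  have "1 / 100 * real t * y \<le> real n - log 2 (real (card C))"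
  proof (cases "n \<le> t")
    case True
    have "y \<le> 0" unfolding y_def using True t n by (simp add: log_le_zero_cancel_iff)
    then have "1 / 100 * real t * y \<le> 0" by (simp add: mult_nonneg_nonpos)
    also have "0 \<le> real 1 * log 2 (real 16 / 2)" using l8 by simp
    also have "\<dots> \<le> real n - log 2 (real (card C))"
      by (rule red[OF C]) (use n t in auto)
    finally show ?thesis .
  next
    case False
    show ?thesis
    proof (cases "n < 32 * t")
      case True
      define m where "m = min ((t + 1) div 2) (n div 16)"
      have m1: "1 \<le> m" unfolding m_def using t n by auto
      have "m \<le> n div 16" unfolding m_def by simp
      then have "m * 16 \<le> n div 16 * 16" by (rule mult_le_mono1)
      then have mn: "m * 16 \<le> n" using div_times_less_eq_dividend[of n 16] by linarith
      have mt: "2 * m \<le> t + 1" unfolding m_def by linarith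
      have r: "real m * 3 \<le> real n - log 2 (real (card C))"
        using red[OF C m1 _ _ mt, of 16] mn l8 by (simp add: mult.commute)
      have "16 * (n div 16) + n mod 16 = n" by simp
      moreover have "n mod 16 < 16" by simp
      ultimately have "t \<le> 32 * (n div 16)" using False n by linarith
      moreover have "t \<le> 32 * ((t + 1) div 2)" by linarith
      ultimately have tm: "t \<le> 32 * m" unfolding m_def by simp
      have "y < 5"
      proof -
        have "real n / real t < 2 ^ 5" using True t by (simp add: divide_less_eq)
        then have "y < log 2 (2 ^ 5)" unfolding y_def using t n
          by (subst log_less_cancel_iff) auto
        then show ?thesis using l32 by simp
      qed
      moreover have "0 \<le> y" unfolding y_def using False t by simp
      ultimately have "1 / 100 * real t * y \<le> 1 / 100 * real t * 5"
        by (intro mult_left_mono) auto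
      also have "\<dots> \<le> real m * 3"
      proof -
        have "real t \<le> real (32 * m)" using tm by (simp only: of_nat_le_iff)
        then show ?thesis by simp
      qed
      also have "\<dots> \<le> real n - log 2 (real (card C))" by (rule r)
      finally show ?thesis .
    next
      case big: False
      define m where "m = (t + 1) div 2"
      define L where "L = n div m"
      have m1: "1 \<le> m" unfolding m_def using t by auto
      have mt: "m \<le> t" "t \<le> 2 * m" unfolding m_def using t by auto
      have mt2: "2 * m \<le> t + 1" unfolding m_def by linarith
      have mL: "m * L \<le> n" unfolding L_def using div_times_less_eq_dividend[of n m] by (simp add: mult.commute)
      have "32 * m \<le> n" using big mt by linarith
      then have L32: "32 \<le> L" unfolding L_def using m1 by (subst less_eq_div_iff_mult_less_eq) (auto simp: mult.commute)
      have "m * L + n mod m = n" unfolding L_def by simp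
      moreover have "n mod m < m" using m1 by simp
      moreover have "m \<le> m * L" using L32 by simp
      ultimately have "n \<le> 2 * m * L" by linarith
      moreover have "2 * m * L \<le> 2 * t * L" using mt by simp
      ultimately have nL: "n \<le> 2 * t * L" by linarith
      have r: "real m * log 2 (real L / 2) \<le> real n - log 2 (real (card C))"
        using red[OF C m1 _ mL mt2] L32 by simp
      have tpos: "0 < real t" using t by simp
      have y5: "5 \<le> y"
      proof -
        have "2 ^ 5 \<le> real n / real t" using big tpos by (simp add: le_divide_eq)
        then have "log 2 (2 ^ 5) \<le> y" unfolding y_def using t n
          by (subst log_le_cancel_iff) auto
        then show ?thesis using l32 by simp
      qed
      have yL: "y - 2 \<le> log 2 (real L / 2)"
      proof -
        have "y - 2 = log 2 (real n / real t / 2 ^ 2)" unfolding y_def using tpos n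
          by (simp add: log_divide log_mult l4)
        also have "\<dots> \<le> log 2 (real L / 2)"
        proof -
          have "real n / real t / 2 ^ 2 \<le> real L / 2"
          proof -
            have "real n \<le> real (2 * t * L)" using nL by (simp only: of_nat_le_iff)
            then have "real n \<le> 2 * real t * real L" by simp
            then show ?thesis using tpos by (simp add: field_simps)
          qed
          then show ?thesis using tpos n L32 by (subst log_le_cancel_iff) auto
        qed
        finally show ?thesis .
      qed
      have "real t \<le> real (2 * m)" using mt(2) by (simp only: of_nat_le_iff)
      then have mt': "real t \<le> 2 * real m" by simp
      have "1 / 100 * real t * y \<le> real t / 2 * (y - 2)"
      proof -
        have "1 / 100 * y \<le> (y - 2) / 2" using y5 by simp
        then have "real t * (1 / 100 * y) \<le> real t * ((y - 2) / 2)" using tpos by (intro mult_left_mono) auto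
        then show ?thesis by (simp add: algebra_simps)
      qed
      also have "\<dots> \<le> real m * (y - 2)" using mt' y5 by (intro mult_right_mono) auto
      also have "\<dots> \<le> real m * log 2 (real L / 2)" using yL by (intro mult_left_mono) auto
      also have "\<dots> \<le> real n - log 2 (real (card C))" by (rule r)
      finally show ?thesis .
    qed
  qed
  then show "1 / 100 * real t * log 2 (real n / real t) \<le> real n - log 2 (real (card C))"
    unfolding y_def .
qed simp

end
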